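(* Let $\mathbb{E}$ be a finite-dimensional Euclidean space, $\mathcal{K}\subseteq\mathbb{E}$ a closed convex cone, $\mathcal{A}:\mathbb{E}\to\mathbb{R}^m$ a surjective linear map and $b\in\mathbb{R}^m$, and let $\mathcal{F}=\{x\in\mathcal{K}:\mathcal{A}x=b\}\neq\emptyset$. Let $\bar x$ be an extreme point of $\mathcal{F}$. Then $\dim\operatorname{face}(\bar x,\mathcal{K})\le m-\operatorname{ips}(\mathcal{F})$.
   Context: $\operatorname{face}(\bar x,\mathcal{K})$ is the minimal face of $\mathcal{K}$ containing $\bar x$. Strict feasibility of $\{x\in C:\mathcal{A}x=b\}$ with respect to a closed convex cone $C$ means that this set contains a point of $\operatorname{relint}(C)$. For a cone $C$, $C^*$ is its dual cone and $C^\perp$ its orthogonal complement. Facial reduction process: set $\mathcal{K}^0=\mathcal{K}$, $k=0$; while strict feasibility fails for $\{x\in\mathcal{K}^k:\mathcal{A}x=b\}$ with respect to $\mathcal{K}^k$, increase $k$ by one, choose $y^k\in\mathbb{R}^m$ with $\mathcal{A}^*y^k\in(\mathcal{K}^{k-1})^*\setminus(\mathcal{K}^{k-1})^\perp$ and $\langle b,y^k\rangle=0$, and set $\mathcal{K}^k=\mathcal{K}^{k-1}\cap(\mathcal{A}^*y^k)^\perp$. Let $\bar{\mathcal{K}}=\mathcal{K}\cap(\mathcal{A}^*y^1)^\perp\cap\cdots\cap(\mathcal{A}^*y^k)^\perp$ be the cone at termination. The implicit problem singularity $\operatorname{ips}(\mathcal{F})$ is the number of redundant equalities in the system $\{x\in\bar{\mathcal{K}}:\mathcal{A}x=b\}$,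 i.e. $m$ minus the rank of $\mathcal{A}$ restricted to $\operatorname{span}\bar{\mathcal{K}}$. *)

theory Defs
  imports "HOL-Analysis.Analysis"
begin

definition min_face :: "'a::euclidean_space \<Rightarrow> 'a set \<Rightarrow> 'a set" where
  "min_face x K = \<Inter> {F. F face_of K \<and> x \<in> F}"

definition dual_cone :: "'a::real_inner set \<Rightarrow> 'a set" where
  "dual_cone C = {z. \<forall>x\<in>C. 0 \<le> inner z x}"

definition orth_compl :: "'a::real_inner set \<Rightarrow> 'a set" where
  "orth_compl C = {z. \<forall>x\<in>C. inner z x = 0}"

definition strictly_feasible :: "'a::euclidean_space set \<Rightarrow> ('a \<Rightarrow> real^'m) \<Rightarrow> real^'m \<Rightarrow> bool" where
  "strictly_feasible C A b \<longleftrightarrow> (\<exists>x\<in>rel_interior C. x \<in> C \<and> A x = b)"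

text \<open>Cone after the facial reduction steps y^1, ..., y^k (given as a list).\<close>
definition fr_cone :: "'a::euclidean_space set \<Rightarrow> ('a \<Rightarrow> real^'m) \<Rightarrow> (real^'m) list \<Rightarrow> 'a set" where
  "fr_cone K A ys = K \<inter> (\<Inter>y\<in>set ys. orth_compl {adjoint A y})"

definition fr_valid :: "'a::euclidean_space set \<Rightarrow> ('a \<Rightarrow> real^'m) \<Rightarrow> real^'m \<Rightarrow> (real^'m) list \<Rightarrow> bool" where
  "fr_valid K A b ys \<longleftrightarrow> (\<forall>k < length ys.
     \<not> strictly_feasible (fr_cone K A (take k ys)) A b \<and>
     adjoint A (ys ! k) \<in> dual_cone (fr_cone K A (take k ys)) - orth_compl (fr_cone K A (take k ys)) \<and>
     inner b (ys ! k) = 0)"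

definition fr_terminated :: "'a::euclidean_space set \<Rightarrow> ('a \<Rightarrow> real^'m) \<Rightarrow> real^'m \<Rightarrow> (real^'m) list \<Rightarrow> bool" where
  "fr_terminated K A b ys \<longleftrightarrow> fr_valid K A b ys \<and> strictly_feasible (fr_cone K A ys) A b"

definition ips :: "'a::euclidean_space set \<Rightarrow> ('a \<Rightarrow> real^'m::finite) \<Rightarrow> (real^'m) list \<Rightarrow> int" where
  "ips K A ys = int CARD('m) - int (dim (A ` span (fr_cone K A ys)))"

end

theory Submission
  imports Defs
begin

lemma fr_cone_snoc:
  "fr_cone K A (xs @ [y]) = fr_cone K A xs \<inter> orth_compl {adjoint A y}"
  unfolding fr_cone_def by auto

lemma fr_cone_face:
  assumes "convex K" "fr_valid K A b ys" "n \<le> length ys"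
  shows "fr_cone K A (take n ys) face_of K"
  using assms(3)
proof (induction n)
  case 0
  then show ?case using assms(1) by (simp add: fr_cone_def face_of_refl)
next
  case (Suc n)
  let ?C = "fr_cone K A (take n ys)"
  let ?w = "adjoint A (ys ! n)"
  have n: "n < length ys" using Suc by simp
  have IH: "?C face_of K" using Suc by simp
  have cv: "convex ?C" using IH face_of_imp_convex by blast
  have w: "?w \<in> dual_cone ?C" using assms(2) n unfolding fr_valid_def by blast
  have ge: "\<And>x. x \<in> ?C \<Longrightarrow> ?w \<bullet> x \<ge> 0" using w unfolding dual_cone_def by auto
  have "take (Suc n) ys = take n ys @ [ys ! n]" using n by (simp add: take_Suc_conv_app_nth)
  then have eq: "fr_cone K A (take (Suc n) ys) = ?C \<inter> {x. ?w \<bullet> x = 0}"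
    by (auto simp: fr_cone_snoc orth_compl_def inner_commute)
  have "(?C \<inter> {x. ?w \<bullet> x = 0}) face_of ?C"
    by (rule face_of_Int_supporting_hyperplane_ge[OF cv ge]) auto
  then show ?case using eq IH face_of_trans by metis
qed

theorem theorem4p4:
  fixes K :: "'a::euclidean_space set" and A :: "'a \<Rightarrow> real^'m" and b :: "real^'m"
    and xbar :: 'a and ys :: "(real^'m) list"
  assumes "closed K" and "convex K" and "cone K"
    and "linear A" and "surj A"
    and "{x \<in> K. A x = b} \<noteq> {}"
    and "xbar extreme_point_of {x \<in> K. A x = b}"
    and "fr_terminated K A b ys"
  shows "int (dim (min_face xbar K)) \<le> int CARD('m) - ips K A ys"
proof -
  define G where "G = min_face xbar K"
  define Kb where "Kb = fr_cone K A ys"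
  have valid: "fr_valid K A b ys" using assms(8) unfolding fr_terminated_def by blast
  have xK: "xbar \<in> K" and xb: "A xbar = b"
    using assms(7) unfolding extreme_point_of_def by auto
  have Kbface: "Kb face_of K"
    using fr_cone_face[OF assms(2) valid, of "length ys"] unfolding Kb_def by simp
  have xKb: "xbar \<in> Kb"
  proof -
    have "xbar \<in> orth_compl {adjoint A y}" if yin: "y \<in> set ys" for y
    proof -
      obtain k where k: "k < length ys" "ys ! k = y" using yin by (auto simp: in_set_conv_nth)
      have "inner b y = 0" using valid k unfolding fr_valid_def by blast
      then show ?thesis using adjoint_works[OF assms(4), of xbar y] xb
        by (simp add: orth_compl_def inner_commute)
    qed
    then show ?thesis using xK unfolding Kb_def fr_cone_def by blast
  qed
  have Gface: "G face_of K"
    unfolding G_def min_face_def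
    by (rule face_of_Inter) (use xK assms(2) face_of_refl in auto)
  have xG: "xbar \<in> G" unfolding G_def min_face_def by auto
  have Gmin: "G \<subseteq> F" if "F face_of K" "xbar \<in> F" for F
    using that unfolding G_def min_face_def by auto
  have GKb: "G \<subseteq> Kb" using Gmin Kbface xKb by blast
  have cvG: "convex G" using Gface face_of_imp_convex by blast
  have xri: "xbar \<in> rel_interior G"
  proof (rule ccontr)
    assume nri: "xbar \<notin> rel_interior G"
    obtain a where a: "a \<noteq> 0" "\<And>y. y \<in> closure G \<Longrightarrow> a \<bullet> xbar \<le> a \<bullet> y"
      "\<And>y. y \<in> rel_interior G \<Longrightarrow> a \<bullet> xbar < a \<bullet> y"
      using supporting_hyperplane_relative_frontier[OF cvG _ nri] xG closure_subset by blast
    have ge: "\<And>y. y \<in> G \<Longrightarrow> a \<bullet> y \<ge> a \<bullet> xbar" using a(2) closure_subset by blast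
    define F where "F = G \<inter> {y. a \<bullet> y = a \<bullet> xbar}"
    have "F face_of G" unfolding F_def by (rule face_of_Int_supporting_hyperplane_ge[OF cvG ge])
    then have "F face_of K" using Gface face_of_trans by blast
    moreover have "xbar \<in> F" using xG unfolding F_def by auto
    ultimately have "G \<subseteq> F" using Gmin by blast
    moreover obtain z where "z \<in> rel_interior G"
      using rel_interior_eq_empty cvG xG by blast
    ultimately show False using a(3) rel_interior_subset unfolding F_def by fastforce
  qed
  have zeroG: "0 \<in> G"
  proof (cases "xbar = 0")
    case True then show ?thesis using xG by simp
  next
    case False
    have "0 \<in> K" using assms(3) xK unfolding cone_def by (metis scale_zero_left order_refl)
    moreover have "2 *\<^sub>R xbar \<in> K" using assms(3) xK unfolding cone_def by simp
    moreover have "xbar \<in> open_segment 0 (2 *\<^sub>R xbar)"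
    proof -
      have nz: "2 *\<^sub>R xbar \<noteq> 0" using False by simp
      have "midpoint 0 (2 *\<^sub>R xbar) = xbar" by (simp add: midpoint_def)
      then show ?thesis using midpoint_in_open_segment[of 0 "2 *\<^sub>R xbar"] nz by metis
    qed
    ultimately show ?thesis using Gface xG face_ofD by blast
  qed
  have ah: "affine hull G = span G"
    by (rule affine_hull_span_0[OF hull_inc[OF zeroG]])
  have inj: "inj_on A (span G)"
    unfolding linear_inj_on_iff_eq_0[OF assms(4) subspace_span]
  proof (intro ballI impI)
    fix d assume dG: "d \<in> span G" and Ad: "A d = 0"
    show "d = 0"
    proof (rule ccontr)
      assume dn: "d \<noteq> 0"
      obtain e where e: "e > 0" "cball xbar e \<inter> affine hull G \<subseteq> G"
        using xri unfolding rel_interior_cball by blast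
      define t where "t = e / norm d"
      have t: "t > 0" "norm (t *\<^sub>R d) = e" using e dn by (auto simp: t_def)
      have xG': "xbar \<in> span G" using xG span_base by blast
      have c1: "dist xbar (xbar + t *\<^sub>R d) = e" using t(2) by (simp add: dist_norm)
      have c2: "dist xbar (xbar - t *\<^sub>R d) = e" using t(2) by (simp add: dist_norm)
      have s1: "xbar + t *\<^sub>R d \<in> span G" by (intro span_add span_scale xG' dG)
      have s2: "xbar - t *\<^sub>R d \<in> span G" by (intro span_diff span_scale xG' dG)
      have p1: "xbar + t *\<^sub>R d \<in> G"
        using e(2) c1 s1 ah by (auto simp: subset_iff)
      have p2: "xbar - t *\<^sub>R d \<in> G"
        using e(2) c2 s2 ah by (auto simp: subset_iff)
      have GK: "G \<subseteq> K" using Gface face_of_imp_subset by blast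
      have A1: "A (xbar + t *\<^sub>R d) = b" "A (xbar - t *\<^sub>R d) = b"
        using xb Ad linear_add[OF assms(4)] linear_diff[OF assms(4)] linear_scale[OF assms(4)]
        by auto
      have ne: "xbar + t *\<^sub>R d \<noteq> xbar - t *\<^sub>R d"
      proof
        assume "xbar + t *\<^sub>R d = xbar - t *\<^sub>R d"
        then have "(2 * t) *\<^sub>R d = 0" by (simp add: algebra_simps scaleR_2 flip: scaleR_add_left)
        then show False using t dn by simp
      qed
      have "midpoint (xbar + t *\<^sub>R d) (xbar - t *\<^sub>R d) = xbar"
        by (simp add: midpoint_def algebra_simps scaleR_2 [symmetric])
      then have "xbar \<in> open_segment (xbar + t *\<^sub>R d) (xbar - t *\<^sub>R d)"
        using midpoint_in_open_segment ne by metis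
      then show False using assms(7) p1 p2 GK A1 unfolding extreme_point_of_def by blast
    qed
  qed
  have "dim G = dim (A ` G)"
    using dim_image_eq[OF assms(4)] inj by (metis span_superset)
  also have "dim (A ` G) \<le> dim (A ` span Kb)"
    by (rule dim_subset) (use GKb span_superset in blast)
  finally show ?thesis unfolding ips_def G_def Kb_def by simp
qed

end
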